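(* For any $\mathcal{H}\subseteq\{0,1\}^{\mathcal{X}}$ and $w\in\mathbb{N}$ with $\operatorname{AL}_w(\mathcal{H})<\infty$, there exists a deterministic online learner which, under full-information feedback and on any sequence $(x_1,y_1),\dots,(x_T,y_T)$ realizable by $\mathcal{H}$ (i.e. $y_t=h(x_t)$ for some $h\in\mathcal{H}$ and all $t$), makes at most $w-1$ false negative mistakes and at most $\operatorname{AL}_w(\mathcal{H})$ false positive mistakes.
   Context: Online binary classification with full-information feedback: in each round $t$ the learner receives $x_t\in\mathcal{X}$, predicts $\hat y_t\in\{0,1\}$, and then observes the true label $y_t$. A false positive mistake is a round with $\hat y_t=1,y_t=0$; a false negative mistake is a round with $\hat y_t=0,y_t=1$. AL tree of width $w\in\mathbb{N}=\{1,2,\dots\}$ and depth $d$: a binary string $u$ is an internal node if $|u|<d$ and $u$ has fewer than $w$ ones; the tree assigns $x_u\in\mathcal{X}$ to each internal node. A path is a binary string $\sigma$ whose proper prefixes are all internal nodes but which is not itself one. The tree is shattered by $\mathcal{H}$ if for every path $\sigma$ some $h\in\mathcal{H}$ satisfies $h(x_{(\sigma_1,\dots,\sigma_{i-1})})=\sigma_i$ for all $i\le|\sigma|$. $\operatorname{AL}_w(\mathcal{H})$ is the largest $d$ such that such a tree of width $w$ and depth $d$ is shattered ($\infty$ if unbounded, $0$ if none). *)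

theory Defs
  imports Main "HOL-Library.Extended_Nat"
begin

text \<open>Binary strings are bool lists (True = 1). A node u is internal in an AL tree
  of width w and depth d iff |u| < d and u has fewer than w ones.\<close>

definition al_internal :: "nat \<Rightarrow> nat \<Rightarrow> bool list \<Rightarrow> bool" where
  "al_internal w d u \<longleftrightarrow> length u < d \<and> count_list u True < w"

definition al_path :: "nat \<Rightarrow> nat \<Rightarrow> bool list \<Rightarrow> bool" where
  "al_path w d \<sigma> \<longleftrightarrow> (\<forall>i<length \<sigma>. al_internal w d (take i \<sigma>)) \<and> \<not> al_internal w d \<sigma>"

text \<open>A tree assigns an instance to each node (only values at internal nodes matter).\<close>

definition al_shattered :: "('x \<Rightarrow> bool) set \<Rightarrow> nat \<Rightarrow> nat \<Rightarrow> (bool list \<Rightarrow> 'x) \<Rightarrow> bool" where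
  "al_shattered H w d tr \<longleftrightarrow>
     (\<forall>\<sigma>. al_path w d \<sigma> \<longrightarrow> (\<exists>h\<in>H. \<forall>i<length \<sigma>. h (tr (take i \<sigma>)) = \<sigma> ! i))"

text \<open>AL_w(H): largest shattered depth; infinity if unbounded; 0 if none (Sup {} = 0).\<close>

definition AL_dim :: "nat \<Rightarrow> ('x \<Rightarrow> bool) set \<Rightarrow> enat" where
  "AL_dim w H = Sup (enat ` {d. \<exists>tr. al_shattered H w d tr})"

text \<open>Deterministic online learner: maps the history of (instance, true label) pairs
  and the current instance to a prediction.\<close>

type_synonym 'x learner = "('x \<times> bool) list \<Rightarrow> 'x \<Rightarrow> bool"

definition predict :: "'x learner \<Rightarrow> ('x \<times> bool) list \<Rightarrow> nat \<Rightarrow> bool" where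
  "predict L S t = L (take t S) (fst (S ! t))"

definition false_pos :: "'x learner \<Rightarrow> ('x \<times> bool) list \<Rightarrow> nat" where
  "false_pos L S = card {t. t < length S \<and> predict L S t \<and> \<not> snd (S ! t)}"

definition false_neg :: "'x learner \<Rightarrow> ('x \<times> bool) list \<Rightarrow> nat" where
  "false_neg L S = card {t. t < length S \<and> \<not> predict L S t \<and> snd (S ! t)}"

definition realizable :: "('x \<Rightarrow> bool) set \<Rightarrow> ('x \<times> bool) list \<Rightarrow> bool" where
  "realizable H S \<longleftrightarrow> (\<exists>h\<in>H. \<forall>p\<in>set S. snd p = h (fst p))"

end

theory Submission
  imports Defs
begin

definition Psh :: "('x \<Rightarrow> bool) set \<Rightarrow> nat \<Rightarrow> nat \<Rightarrow> bool" where
  "Psh V k d \<longleftrightarrow> (\<exists>tr. al_shattered V k d tr)"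

lemma Psh_mono: "Psh V k d \<Longrightarrow> V \<subseteq> V' \<Longrightarrow> Psh V' k d"
proof -
  assume "Psh V k d" "V \<subseteq> V'"
  then obtain tr where "al_shattered V k d tr" unfolding Psh_def by blast
  then have "al_shattered V' k d tr" using \<open>V \<subseteq> V'\<close> unfolding al_shattered_def by (meson subsetD)
  then show ?thesis unfolding Psh_def by blast
qed

lemma Psh_zero: "V \<noteq> {} \<Longrightarrow> Psh V k 0"
proof -
  assume "V \<noteq> {}"
  then obtain h where "h \<in> V" by blast
  have "al_shattered V k 0 (\<lambda>_. undefined)"
    unfolding al_shattered_def
  proof (intro allI impI)
    fix \<sigma> assume p: "al_path k 0 \<sigma>"
    have "\<sigma> = []"
    proof (rule ccontr)
      assume "\<sigma> \<noteq> []"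
      then have "al_internal k 0 (take 0 \<sigma>)" using p unfolding al_path_def by auto
      then show False unfolding al_internal_def by simp
    qed
    then show "\<exists>h\<in>V. \<forall>i<length \<sigma>. h ((\<lambda>_. undefined) (take i \<sigma>)) = \<sigma> ! i"
      using \<open>h \<in> V\<close> by auto
  qed
  then show ?thesis unfolding Psh_def by blast
qed

lemma Psh_width0: "V \<noteq> {} \<Longrightarrow> Psh V 0 d"
proof -
  assume "V \<noteq> {}"
  then obtain h where "h \<in> V" by blast
  have "al_shattered V 0 d (\<lambda>_. undefined)"
    unfolding al_shattered_def
  proof (intro allI impI)
    fix \<sigma> assume p: "al_path 0 d \<sigma>"
    have "\<sigma> = []"
    proof (rule ccontr)
      assume "\<sigma> \<noteq> []"
      then have "al_internal 0 d (take 0 \<sigma>)" using p unfolding al_path_def by auto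
      then show False unfolding al_internal_def by simp
    qed
    then show "\<exists>h\<in>V. \<forall>i<length \<sigma>. h ((\<lambda>_. undefined) (take i \<sigma>)) = \<sigma> ! i"
      using \<open>h \<in> V\<close> by auto
  qed
  then show ?thesis unfolding Psh_def by blast
qed

lemma Psh_down1: "Psh V k (Suc d) \<Longrightarrow> Psh V k d"
proof -
  assume "Psh V k (Suc d)"
  then obtain tr where sh: "al_shattered V k (Suc d) tr" unfolding Psh_def by blast
  have "al_shattered V k d tr"
    unfolding al_shattered_def
  proof (intro allI impI)
    fix \<sigma> assume p: "al_path k d \<sigma>"
    have pre: "\<And>i. i < length \<sigma> \<Longrightarrow> al_internal k d (take i \<sigma>)"
      using p unfolding al_path_def by auto
    have ni: "\<not> al_internal k d \<sigma>" using p unfolding al_path_def by auto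
    have len: "length \<sigma> \<le> d"
    proof (rule ccontr)
      assume "\<not> length \<sigma> \<le> d"
      then have "al_internal k d (take d \<sigma>)" using pre by auto
      then show False using \<open>\<not> length \<sigma> \<le> d\<close> unfolding al_internal_def by auto
    qed
    show "\<exists>h\<in>V. \<forall>i<length \<sigma>. h (tr (take i \<sigma>)) = \<sigma> ! i"
    proof (cases "count_list \<sigma> True < k")
      case False
      have "al_path k (Suc d) \<sigma>"
        unfolding al_path_def
      proof (intro conjI allI impI)
        fix i assume "i < length \<sigma>"
        then show "al_internal k (Suc d) (take i \<sigma>)" using pre[of i] unfolding al_internal_def by simp
      next
        show "\<not> al_internal k (Suc d) \<sigma>" using False unfolding al_internal_def by simp
      qed
      then show ?thesis using sh unfolding al_shattered_def by blast
    next
      case True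
      with ni have ld: "length \<sigma> = d" using len unfolding al_internal_def by auto
      define \<sigma>' where "\<sigma>' = \<sigma> @ [False]"
      have "al_path k (Suc d) \<sigma>'"
        unfolding al_path_def
      proof (intro conjI allI impI)
        fix i assume "i < length \<sigma>'"
        then have "i \<le> length \<sigma>" unfolding \<sigma>'_def by simp
        then show "al_internal k (Suc d) (take i \<sigma>')"
        proof (cases "i = length \<sigma>")
          case True
          then show ?thesis using \<open>count_list \<sigma> True < k\<close> ld
            unfolding \<sigma>'_def al_internal_def by simp
        next
          case False
          then have "i < length \<sigma>" using \<open>i \<le> length \<sigma>\<close> by simp
          then show ?thesis using pre[of i] unfolding \<sigma>'_def al_internal_def by simp
        qed
      next
        show "\<not> al_internal k (Suc d) \<sigma>'" unfolding \<sigma>'_def al_internal_def using ld by simp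
      qed
      then obtain h where h: "h \<in> V" "\<forall>i<length \<sigma>'. h (tr (take i \<sigma>')) = \<sigma>' ! i"
        using sh unfolding al_shattered_def by blast
      have "\<forall>i<length \<sigma>. h (tr (take i \<sigma>)) = \<sigma> ! i"
      proof (intro allI impI)
        fix i assume "i < length \<sigma>"
        then show "h (tr (take i \<sigma>)) = \<sigma> ! i"
          using h(2)[rule_format, of i] unfolding \<sigma>'_def by (simp add: nth_append)
      qed
      then show ?thesis using h(1) by blast
    qed
  qed
  then show ?thesis unfolding Psh_def by blast
qed

lemma Psh_down: "Psh V k d \<Longrightarrow> d' \<le> d \<Longrightarrow> Psh V k d'"
proof (induction d)
  case 0
  then show ?case by simp
next
  case (Suc d)
  show ?case
  proof (cases "d' = Suc d")
    case True
    then show ?thesis using Suc.prems by simp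
  next
    case False
    then have "d' \<le> d" using Suc.prems by simp
    moreover have "Psh V k d" using Psh_down1 Suc.prems(1) by blast
    ultimately show ?thesis using Suc.IH by blast
  qed
qed

lemma internal_cons:
  "al_internal k (Suc d) (b # u) \<longleftrightarrow>
     (if b then al_internal (k - 1) d u \<and> k \<ge> 1 else al_internal k d u)"
  unfolding al_internal_def by auto

lemma Psh_combine:
  assumes k: "k \<ge> 1"
    and p0: "Psh {h\<in>V. \<not> h x} k d" and p1: "Psh {h\<in>V. h x} (k - 1) d"
  shows "Psh V k (Suc d)"
proof -
  obtain tr0 where s0: "al_shattered {h\<in>V. \<not> h x} k d tr0" using p0 unfolding Psh_def by blast
  obtain tr1 where s1: "al_shattered {h\<in>V. h x} (k - 1) d tr1" using p1 unfolding Psh_def by blast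
  define tr where "tr = (\<lambda>u. case u of [] \<Rightarrow> x | b # u' \<Rightarrow> (if b then tr1 u' else tr0 u'))"
  have "al_shattered V k (Suc d) tr"
    unfolding al_shattered_def
  proof (intro allI impI)
    fix \<sigma> assume p: "al_path k (Suc d) \<sigma>"
    have pre: "\<And>i. i < length \<sigma> \<Longrightarrow> al_internal k (Suc d) (take i \<sigma>)"
      using p unfolding al_path_def by auto
    have ni: "\<not> al_internal k (Suc d) \<sigma>" using p unfolding al_path_def by auto
    have "\<sigma> \<noteq> []" using ni k unfolding al_internal_def by auto
    then obtain b \<tau> where \<sigma>: "\<sigma> = b # \<tau>" by (cases \<sigma>) auto
    show "\<exists>h\<in>V. \<forall>i<length \<sigma>. h (tr (take i \<sigma>)) = \<sigma> ! i"
    proof (cases b)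
      case True
      have "al_path (k - 1) d \<tau>"
        unfolding al_path_def
      proof (intro conjI allI impI)
        fix i assume "i < length \<tau>"
        then have "al_internal k (Suc d) (take (Suc i) \<sigma>)" using pre[of "Suc i"] \<sigma> by simp
        then show "al_internal (k - 1) d (take i \<tau>)" using \<sigma> True by (simp add: internal_cons)
      next
        show "\<not> al_internal (k - 1) d \<tau>" using ni \<sigma> True k by (simp add: internal_cons)
      qed
      then obtain h where h: "h \<in> {h\<in>V. h x}" "\<forall>i<length \<tau>. h (tr1 (take i \<tau>)) = \<tau> ! i"
        using s1 unfolding al_shattered_def by blast
      have "\<forall>i<length \<sigma>. h (tr (take i \<sigma>)) = \<sigma> ! i"
      proof (intro allI impI)
        fix i assume "i < length \<sigma>"
        then show "h (tr (take i \<sigma>)) = \<sigma> ! i"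
          using h True \<sigma> by (cases i) (auto simp: tr_def)
      qed
      then show ?thesis using h(1) by blast
    next
      case False
      have "al_path k d \<tau>"
        unfolding al_path_def
      proof (intro conjI allI impI)
        fix i assume "i < length \<tau>"
        then have "al_internal k (Suc d) (take (Suc i) \<sigma>)" using pre[of "Suc i"] \<sigma> by simp
        then show "al_internal k d (take i \<tau>)" using \<sigma> False by (simp add: internal_cons)
      next
        show "\<not> al_internal k d \<tau>" using ni \<sigma> False by (simp add: internal_cons)
      qed
      then obtain h where h: "h \<in> {h\<in>V. \<not> h x}" "\<forall>i<length \<tau>. h (tr0 (take i \<tau>)) = \<tau> ! i"
        using s0 unfolding al_shattered_def by blast
      have "\<forall>i<length \<sigma>. h (tr (take i \<sigma>)) = \<sigma> ! i"
      proof (intro allI impI)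
        fix i assume "i < length \<sigma>"
        then show "h (tr (take i \<sigma>)) = \<sigma> ! i"
          using h False \<sigma> by (cases i) (auto simp: tr_def)
      qed
      then show ?thesis using h(1) by blast
    qed
  qed
  then show ?thesis unfolding Psh_def by blast
qed

definition decide :: "('x \<Rightarrow> bool) set \<Rightarrow> nat \<Rightarrow> 'x \<Rightarrow> bool" where
  "decide V k x \<longleftrightarrow> \<not> ({h\<in>V. \<not> h x} \<noteq> {} \<and> (\<forall>d. Psh V k d \<longrightarrow> Psh {h\<in>V. \<not> h x} k d))"

fun stepf :: "('x \<Rightarrow> bool) set \<times> nat \<Rightarrow> 'x \<times> bool \<Rightarrow> ('x \<Rightarrow> bool) set \<times> nat" where
  "stepf (V, k) (x, y) = ({h\<in>V. h x = y}, if \<not> decide V k x \<and> y then k - 1 else k)"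

definition st :: "('x \<Rightarrow> bool) set \<Rightarrow> nat \<Rightarrow> ('x \<times> bool) list \<Rightarrow> ('x \<Rightarrow> bool) set \<times> nat" where
  "st H w S = foldl stepf (H, w) S"

definition Lrn :: "('x \<Rightarrow> bool) set \<Rightarrow> nat \<Rightarrow> 'x learner" where
  "Lrn H w S x = decide (fst (st H w S)) (snd (st H w S)) x"

lemma card_snoc: "card {t. t < Suc n \<and> Q t} = card {t. t < n \<and> Q t} + (if Q n then 1 else 0)"
proof -
  have "{t. t < Suc n \<and> Q t} = {t. t < n \<and> Q t} \<union> (if Q n then {n} else {})"
    by (auto simp: less_Suc_eq)
  then show ?thesis by (simp add: card_insert_if)
qed

lemma predict_snoc: "t < length S \<Longrightarrow> predict L (S @ [p]) t = predict L S t"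
  unfolding predict_def by (simp add: nth_append)

lemma fn_snoc: "false_neg L (S @ [p]) = false_neg L S + (if \<not> L S (fst p) \<and> snd p then 1 else 0)"
proof -
  have e: "{t. t < length S \<and> \<not> predict L (S @ [p]) t \<and> snd ((S @ [p]) ! t)}
        = {t. t < length S \<and> \<not> predict L S t \<and> snd (S ! t)}"
    by (auto simp: predict_snoc nth_append)
  have "predict L (S @ [p]) (length S) = L S (fst p)" unfolding predict_def by simp
  then show ?thesis unfolding false_neg_def
    using card_snoc[of "length S" "\<lambda>t. \<not> predict L (S @ [p]) t \<and> snd ((S @ [p]) ! t)"] e
    by simp
qed

lemma fp_snoc: "false_pos L (S @ [p]) = false_pos L S + (if L S (fst p) \<and> \<not> snd p then 1 else 0)"
proof -
  have e: "{t. t < length S \<and> predict L (S @ [p]) t \<and> \<not> snd ((S @ [p]) ! t)}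
        = {t. t < length S \<and> predict L S t \<and> \<not> snd (S ! t)}"
    by (auto simp: predict_snoc nth_append)
  have "predict L (S @ [p]) (length S) = L S (fst p)" unfolding predict_def by simp
  then show ?thesis unfolding false_pos_def
    using card_snoc[of "length S" "\<lambda>t. predict L (S @ [p]) t \<and> \<not> snd ((S @ [p]) ! t)"] e
    by simp
qed

lemma invariant:
  assumes w: "w \<ge> 1" and bnd: "\<And>d. Psh H w d \<Longrightarrow> d \<le> D" and hs: "hs \<in> H"
  shows "(\<forall>p\<in>set S. snd p = hs (fst p)) \<Longrightarrow>
    hs \<in> fst (st H w S) \<and> 1 \<le> snd (st H w S) \<and> false_neg (Lrn H w) S + snd (st H w S) = w \<and>
    (\<forall>d. Psh (fst (st H w S)) (snd (st H w S)) d \<longrightarrow> d + false_pos (Lrn H w) S \<le> D)"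
proof (induction S rule: rev_induct)
  case Nil
  then show ?case using w bnd hs by (simp add: st_def false_neg_def false_pos_def)
next
  case (snoc p S)
  obtain x y where p: "p = (x, y)" by (cases p)
  define V where "V = fst (st H w S)"
  define k where "k = snd (st H w S)"
  define FN where "FN = false_neg (Lrn H w) S"
  define FP where "FP = false_pos (Lrn H w) S"
  define V0 where "V0 = {h\<in>V. \<not> h x}"
  define V1 where "V1 = {h\<in>V. h x}"
  have IH: "hs \<in> V" "1 \<le> k" "FN + k = w" "\<And>d. Psh V k d \<Longrightarrow> d + FP \<le> D"
    using snoc by (auto simp: V_def k_def FN_def FP_def)
  have y: "y = hs x" using snoc.prems p by simp
  have stS: "st H w (S @ [p]) = ({h\<in>V. h x = y}, if \<not> decide V k x \<and> y then k - 1 else k)"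
  proof -
    have e: "st H w S = (V, k)" unfolding V_def k_def by simp
    then show ?thesis unfolding st_def p by simp
  qed
  have L: "Lrn H w S x = decide V k x" unfolding Lrn_def V_def k_def by simp
  have fnS: "false_neg (Lrn H w) (S @ [p]) = FN + (if \<not> decide V k x \<and> y then 1 else 0)"
    using fn_snoc[of "Lrn H w" S p] L p FN_def by simp
  have fpS: "false_pos (Lrn H w) (S @ [p]) = FP + (if decide V k x \<and> \<not> y then 1 else 0)"
    using fp_snoc[of "Lrn H w" S p] L p FP_def by simp
  have Vne: "V \<noteq> {}" using IH(1) by blast
  show ?case
  proof (cases y)
    case False
    have V': "{h\<in>V. h x = y} = V0" using False V0_def by auto
    have hs0: "hs \<in> V0" using IH(1) y False V0_def by simp
    show ?thesis
    proof (cases "decide V k x")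
      case True
      then obtain d0 where d0: "Psh V k d0" "\<not> Psh V0 k d0"
        using hs0 unfolding decide_def V0_def by blast
      have "\<forall>d. Psh V0 k d \<longrightarrow> d + (FP + 1) \<le> D"
      proof (intro allI impI)
        fix d assume "Psh V0 k d"
        then have "d < d0" using d0(2) Psh_down[of V0 k d d0] by (cases "d0 \<le> d") auto
        then show "d + (FP + 1) \<le> D" using IH(4)[OF d0(1)] by simp
      qed
      then show ?thesis using stS fnS fpS True False V' hs0 IH by simp
    next
      case dF: False
      have "\<forall>d. Psh V0 k d \<longrightarrow> d + FP \<le> D"
        using IH(4) Psh_mono[of V0 k _ V] V0_def by auto
      then show ?thesis using stS fnS fpS dF False V' hs0 IH by simp
    qed
  next
    case True
    have V': "{h\<in>V. h x = y} = V1" using True V1_def by auto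
    have hs1: "hs \<in> V1" using IH(1) y True V1_def by simp
    show ?thesis
    proof (cases "decide V k x")
      case dT: True
      have "\<forall>d. Psh V1 k d \<longrightarrow> d + FP \<le> D"
        using IH(4) Psh_mono[of V1 k _ V] V1_def by auto
      then show ?thesis using stS fnS fpS dT True V' hs1 IH by simp
    next
      case dF: False
      then have all0: "\<And>d. Psh V k d \<Longrightarrow> Psh V0 k d" unfolding decide_def V0_def by blast
      have key: "Psh V1 (k - 1) d \<Longrightarrow> Psh V k d" for d
      proof (induction d)
        case 0
        then show ?case using Psh_zero Vne by blast
      next
        case (Suc d)
        then have "Psh V1 (k - 1) d" using Psh_down1 by blast
        then have "Psh V k d" using Suc.IH by blast
        then have "Psh V0 k d" using all0 by blast
        then show ?case using Psh_combine[of k V x d] IH(2) \<open>Psh V1 (k - 1) d\<close>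
          unfolding V0_def V1_def by blast
      qed
      have key2: "Psh V1 (k - 1) d \<Longrightarrow> Psh V k (Suc d)" for d
      proof -
        assume a: "Psh V1 (k - 1) d"
        then have "Psh V0 k d" using key all0 by blast
        then show ?thesis using Psh_combine[of k V x d] IH(2) a unfolding V0_def V1_def by blast
      qed
      have k2: "2 \<le> k"
      proof (rule ccontr)
        assume "\<not> 2 \<le> k"
        then have "k = 1" using IH(2) by simp
        have "V1 \<noteq> {}" using hs1 by blast
        then have "Psh V1 (k - 1) D" using Psh_width0 \<open>k = 1\<close> by simp
        then have "Psh V k (Suc D)" using key2 by blast
        then show False using IH(4) by fastforce
      qed
      have "\<forall>d. Psh V1 (k - 1) d \<longrightarrow> d + FP \<le> D"
      proof (intro allI impI)
        fix d assume "Psh V1 (k - 1) d"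
        then have "Psh V k (Suc d)" using key2 by blast
        then show "d + FP \<le> D" using IH(4) by fastforce
      qed
      then show ?thesis using stS fnS fpS dF True V' hs1 IH k2 by simp
    qed
  qed
qed

theorem lemma3:
  fixes H :: "('x \<Rightarrow> bool) set" and w :: nat
  assumes "w \<ge> 1"
    and "AL_dim w H \<noteq> \<infinity>"
  shows "\<exists>L :: 'x learner. \<forall>S. realizable H S \<longrightarrow>
           false_neg L S \<le> w - 1 \<and> enat (false_pos L S) \<le> AL_dim w H"
proof -
  obtain D where D: "AL_dim w H = enat D" using assms(2) by (cases "AL_dim w H") auto
  have bnd: "d \<le> D" if "Psh H w d" for d
  proof -
    have "enat d \<le> AL_dim w H" unfolding AL_dim_def
      by (rule Sup_upper) (use that in \<open>auto simp: Psh_def\<close>)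
    then show ?thesis using D by simp
  qed
  show ?thesis
  proof (intro exI allI impI)
    fix S assume "realizable H S"
    then obtain hs where hs: "hs \<in> H" "\<forall>p\<in>set S. snd p = hs (fst p)"
      unfolding realizable_def by blast
    note inv = invariant[OF assms(1) bnd hs(1) hs(2)]
    have "fst (st H w S) \<noteq> {}" using inv by blast
    then have "Psh (fst (st H w S)) (snd (st H w S)) 0" by (rule Psh_zero)
    then have "false_pos (Lrn H w) S \<le> D" using inv by fastforce
    then show "false_neg (Lrn H w) S \<le> w - 1 \<and> enat (false_pos (Lrn H w) S) \<le> AL_dim w H"
      using inv D by auto
  qed
qed

end
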